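(* Let $m,n,s,k$ be integers such that $2\leqslant s\leqslant n$, $2\leqslant k\leqslant m$ and $ms=nk$. Let $c\geqslant 1$ and let $\Gamma$ be an abelian group of order $nkc$. Then there exists an $\mathrm{MRS}_\Gamma(m,n;s,k;c)$ in each of the following cases: (1) $s\equiv k\equiv 0\pmod 4$; (2) $s\equiv 2\pmod 4$ and $k\equiv 0\pmod 4$; (3) $s\equiv 0\pmod 4$ and $k\equiv 2\pmod 4$; (4) $s\equiv k\equiv 2\pmod 4$ and $m\equiv n\equiv 0\pmod 2$.
   Context: For positive integers $m,n,s,k,c$ and an abelian group $\Gamma$ of order $nkc$, an $\mathrm{MRS}_\Gamma(m,n;s,k;c)$ is a set of $c$ partially filled $m\times n$ arrays (some cells may be empty) with entries in $\Gamma$ such that: every element of $\Gamma$ appears exactly once and in a unique array; in every array each row contains exactly $s$ filled cells and each column contains exactly $k$ filled cells; and there exist $\omega,\delta\in\Gamma$ such that in every array each row sum is $\omega$ and each column sum is $\delta$. *)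

theory Defs
  imports "HOL-Algebra.FiniteProduct"
begin

text \<open>A family of c partially filled m x n arrays with entries in the group G is a
function A: A t i j = None means cell (i,j) of array t is empty, Some g means it
contains g. Only indices t < c, i < m, j < n are relevant. The group operation
of G (written multiplicatively in HOL-Algebra) plays the role of the sum.\<close>

definition filled_cells :: "(nat \<Rightarrow> nat \<Rightarrow> nat \<Rightarrow> 'a option) \<Rightarrow> nat \<Rightarrow> nat \<Rightarrow> nat \<Rightarrow> (nat \<times> nat \<times> nat) set" where
  "filled_cells A c m n = {(t, i, j). t < c \<and> i < m \<and> j < n \<and> A t i j \<noteq> None}"

definition is_MRS ::
  "('a, 'b) monoid_scheme \<Rightarrow> nat \<Rightarrow> nat \<Rightarrow> nat \<Rightarrow> nat \<Rightarrow> nat \<Rightarrow>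
   (nat \<Rightarrow> nat \<Rightarrow> nat \<Rightarrow> 'a option) \<Rightarrow> bool" where
  "is_MRS G m n s k c A \<longleftrightarrow>
     card (carrier G) = n * k * c \<and>
     \<comment> \<open>all entries lie in the group\<close>
     (\<forall>t<c. \<forall>i<m. \<forall>j<n. \<forall>g. A t i j = Some g \<longrightarrow> g \<in> carrier G) \<and>
     \<comment> \<open>every group element appears exactly once, in a unique array\<close>
     (\<forall>g\<in>carrier G. \<exists>!p. p \<in> filled_cells A c m n \<and>
          (case p of (t, i, j) \<Rightarrow> A t i j = Some g)) \<and>
     \<comment> \<open>each row has exactly s filled cells, each column exactly k\<close>
     (\<forall>t<c. \<forall>i<m. card {j. j < n \<and> A t i j \<noteq> None} = s) \<and>
     (\<forall>t<c. \<forall>j<n. card {i. i < m \<and> A t i j \<noteq> None} = k) \<and>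
     \<comment> \<open>common row sum \<omega> and common column sum \<delta>\<close>
     (\<exists>\<omega>\<in>carrier G. \<exists>\<delta>\<in>carrier G.
        (\<forall>t<c. \<forall>i<m. finprod G (\<lambda>j. the (A t i j)) {j. j < n \<and> A t i j \<noteq> None} = \<omega>) \<and>
        (\<forall>t<c. \<forall>j<n. finprod G (\<lambda>i. the (A t i j)) {i. i < m \<and> A t i j \<noteq> None} = \<delta>))"

definition MRS_exists ::
  "('a, 'b) monoid_scheme \<Rightarrow> nat \<Rightarrow> nat \<Rightarrow> nat \<Rightarrow> nat \<Rightarrow> nat \<Rightarrow> bool" where
  "MRS_exists G m n s k c \<longleftrightarrow> (\<exists>A. is_MRS G m n s k c A)"

end

theory Submission
  imports Defs
begin

lemma invol_even:
  assumes "finite S" "\<And>x. x \<in> S \<Longrightarrow> \<pi> x \<in> S" "\<And>x. x \<in> S \<Longrightarrow> \<pi> (\<pi> x) = x"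
    "\<And>x. x \<in> S \<Longrightarrow> \<pi> x \<noteq> x"
  shows "even (card S)"
  using assms
proof (induction "card S" arbitrary: S rule: less_induct)
  case less
  show ?case
  proof (cases "S = {}")
    case True then show ?thesis by simp
  next
    case False
    then obtain x where x: "x \<in> S" by blast
    define S' where "S' = S - {x, \<pi> x}"
    have px: "\<pi> x \<in> S" "\<pi> x \<noteq> x" using less x by auto
    have cS: "card S = card S' + 2"
    proof -
      have "card S' = card S - card {x, \<pi> x}" unfolding S'_def
        using less(2) x px by (subst card_Diff_subset) auto
      moreover have "card {x, \<pi> x} = 2" using px by auto
      moreover have "card S \<ge> 2" using x px less(2)
        by (metis \<open>card {x, \<pi> x} = 2\<close> card_mono empty_subsetI insert_subset)
      ultimately show ?thesis by simp
    qed
    have "even (card S')"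
    proof (rule less(1))
      show "card S' < card S" using cS by simp
      show "finite S'" using less(2) S'_def by simp
      fix y assume y: "y \<in> S'"
      then have yS: "y \<in> S" "y \<noteq> x" "y \<noteq> \<pi> x" unfolding S'_def by auto
      show "\<pi> y \<in> S'" unfolding S'_def using yS less(3,4) x
        by (metis Diff_iff insertE singletonD)
      show "\<pi> (\<pi> y) = y" using yS less(4) by simp
      show "\<pi> y \<noteq> y" using yS less(5) by simp
    qed
    then show ?thesis using cS by simp
  qed
qed

context comm_group begin

lemma finprod_invol:
  assumes "finite S" "\<And>x. x \<in> S \<Longrightarrow> \<pi> x \<in> S" "\<And>x. x \<in> S \<Longrightarrow> \<pi> (\<pi> x) = x"
    "\<And>x. x \<in> S \<Longrightarrow> \<pi> x \<noteq> x" "f \<in> S \<rightarrow> carrier G" "\<sigma> \<in> carrier G"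
    "\<And>x. x \<in> S \<Longrightarrow> f x \<otimes> f (\<pi> x) = \<sigma>"
  shows "finprod G f S = \<sigma> [^] (card S div 2)"
  using assms
proof (induction "card S" arbitrary: S rule: less_induct)
  case less
  show ?case
  proof (cases "S = {}")
    case True then show ?thesis by simp
  next
    case False
    then obtain x where x: "x \<in> S" by blast
    define S' where "S' = S - {x, \<pi> x}"
    have px: "\<pi> x \<in> S" "\<pi> x \<noteq> x" using less x by auto
    have cS: "card S = card S' + 2"
    proof -
      have "card S' = card S - card {x, \<pi> x}" unfolding S'_def
        using less(2) x px by (subst card_Diff_subset) auto
      moreover have "card {x, \<pi> x} = 2" using px by auto
      moreover have "card S \<ge> 2" using x px less(2)
        by (metis \<open>card {x, \<pi> x} = 2\<close> card_mono empty_subsetI insert_subset)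
      ultimately show ?thesis by simp
    qed
    have IH: "finprod G f S' = \<sigma> [^] (card S' div 2)"
    proof (rule less(1))
      show "card S' < card S" using cS by simp
      show "finite S'" using less(2) S'_def by simp
      show "f \<in> S' \<rightarrow> carrier G" using less(6) S'_def by auto
      show "\<sigma> \<in> carrier G" by fact
      fix y assume y: "y \<in> S'"
      then have yS: "y \<in> S" "y \<noteq> x" "y \<noteq> \<pi> x" unfolding S'_def by auto
      show "\<pi> y \<in> S'" unfolding S'_def using yS less(3,4) x
        by (metis Diff_iff insertE singletonD)
      show "\<pi> (\<pi> y) = y" using yS less(4) by simp
      show "\<pi> y \<noteq> y" using yS less(5) by simp
      show "f y \<otimes> f (\<pi> y) = \<sigma>" using yS less(8) by simp
    qed
    have Seq: "S = insert x (insert (\<pi> x) S')" using x px S'_def by auto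
    have fin: "finite S'" using less(2) S'_def by simp
    have nin: "x \<notin> insert (\<pi> x) S'" "\<pi> x \<notin> S'" using px unfolding S'_def by auto
    have fS: "f \<in> S' \<rightarrow> carrier G" "f x \<in> carrier G" "f (\<pi> x) \<in> carrier G"
      using less(6) x px unfolding S'_def by auto
    have "finprod G f S = f x \<otimes> (f (\<pi> x) \<otimes> finprod G f S')"
      apply (subst Seq) using fin nin fS by simp
    also have "\<dots> = \<sigma> \<otimes> finprod G f S'"
      using fS fin less(8)[OF x] by (simp add: m_assoc[symmetric])
    also have "\<dots> = \<sigma> [^] (card S div 2)" using IH cS less(7)
      by (simp add: nat_pow_Suc2 m_comm)
    finally show ?thesis .
  qed
qed

end

context comm_group begin

lemma odd_card_noinv:
  assumes "finite D" "D \<subseteq> carrier G" "\<one> \<in> D" "\<And>y. y \<in> D \<Longrightarrow> inv y \<in> D"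
    "\<And>y. y \<in> D \<Longrightarrow> y \<otimes> y = \<one> \<Longrightarrow> y = \<one>"
  shows "odd (card D)"
proof -
  have "even (card (D - {\<one>}))"
  proof (rule invol_even[where \<pi> = "\<lambda>x. inv x"])
    show "finite (D - {\<one>})" using assms by simp
    fix x assume x: "x \<in> D - {\<one>}"
    then have xc: "x \<in> carrier G" using assms by auto
    show "inv x \<in> D - {\<one>}" using x assms(4) xc
      by (metis DiffD1 DiffD2 DiffI inv_eq_1_iff singleton_iff)
    show "inv (inv x) = x" using xc by simp
    show "inv x \<noteq> x"
    proof
      assume "inv x = x"
      then have "x \<otimes> x = \<one>" using xc by (metis r_inv)
      then show False using assms(5) x by auto
    qed
  qed
  moreover have "card D = card (D - {\<one>}) + 1" using assms
    by (metis One_nat_def add.commute card.remove finite_Diff plus_1_eq_Suc card_Diff_singleton card_gt_0_iff empty_iff Suc_pred)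
  ultimately show ?thesis by simp
qed

lemma card_sq_ker:
  assumes fin: "finite (carrier G)"
  shows "card ((\<lambda>x. x \<otimes> x) ` carrier G) * card {x \<in> carrier G. x \<otimes> x = \<one>} = card (carrier G)"
proof -
  define D where "D = (\<lambda>x. x \<otimes> x) ` carrier G"
  define K where "K = {x \<in> carrier G. x \<otimes> x = \<one>}"
  define fib where "fib y = {x \<in> carrier G. x \<otimes> x = y}" for y
  have U: "carrier G = (\<Union>y\<in>D. fib y)" unfolding D_def fib_def by auto
  have "card (carrier G) = (\<Sum>y\<in>D. card (fib y))"
    unfolding U
    by (rule card_UN_disjoint) (use fin in \<open>auto simp: D_def fib_def\<close>)
  also have "\<dots> = (\<Sum>y\<in>D. card K)"
  proof (rule sum.cong[OF refl])
    fix y assume "y \<in> D"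
    then obtain x0 where x0: "x0 \<in> carrier G" "y = x0 \<otimes> x0" unfolding D_def by auto
    have "fib y = (\<lambda>k. x0 \<otimes> k) ` K"
    proof
      show "fib y \<subseteq> (\<lambda>k. x0 \<otimes> k) ` K"
      proof
        fix x assume x: "x \<in> fib y"
        then have xc: "x \<in> carrier G" "x \<otimes> x = x0 \<otimes> x0" using x0 unfolding fib_def by auto
        have "(inv x0 \<otimes> x) \<otimes> (inv x0 \<otimes> x) = (inv x0 \<otimes> inv x0) \<otimes> (x \<otimes> x)"
          using xc(1) x0 by (simp add: m_ac)
        also have "\<dots> = inv (x0 \<otimes> x0) \<otimes> (x0 \<otimes> x0)" using xc x0 by (simp add: inv_mult_group del: r_inv l_inv)
        also have "\<dots> = \<one>" using x0 by simp
        finally have "inv x0 \<otimes> x \<in> K" unfolding K_def using xc x0 by simp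
        moreover have "x = x0 \<otimes> (inv x0 \<otimes> x)" using xc x0 by (simp add: m_assoc[symmetric])
        ultimately show "x \<in> (\<lambda>k. x0 \<otimes> k) ` K" by blast
      qed
      show "(\<lambda>k. x0 \<otimes> k) ` K \<subseteq> fib y"
      proof
        fix x assume "x \<in> (\<lambda>k. x0 \<otimes> k) ` K"
        then obtain k where k: "k \<in> carrier G" "k \<otimes> k = \<one>" "x = x0 \<otimes> k" unfolding K_def by auto
        have "x \<otimes> x = (x0 \<otimes> x0) \<otimes> (k \<otimes> k)" using k(1,3) x0 by (simp add: m_ac)
        also have "\<dots> = x0 \<otimes> x0" using k x0 by simp
        finally show "x \<in> fib y" using k x0 unfolding fib_def by simp
      qed
    qed
    moreover have "inj_on (\<lambda>k. x0 \<otimes> k) K" using x0 unfolding K_def inj_on_def by auto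
    ultimately show "card (fib y) = card K" by (simp add: card_image)
  qed
  finally show ?thesis unfolding D_def K_def by simp
qed

lemma exists_d_sigma:
  assumes fin: "finite (carrier G)" and four: "4 dvd card (carrier G)"
  shows "\<exists>d\<in>carrier G. \<exists>\<sigma>\<in>carrier G. d \<noteq> \<one> \<and> d \<otimes> d = \<one> \<and>
           (\<forall>x\<in>carrier G. x \<otimes> x \<noteq> \<sigma> \<and> d \<otimes> (x \<otimes> x) \<noteq> \<sigma>)"
proof -
  define D where "D = (\<lambda>x. x \<otimes> x) ` carrier G"
  define K where "K = {x \<in> carrier G. x \<otimes> x = \<one>}"
  define N where "N = card (carrier G)"
  have DK: "card D * card K = N" using card_sq_ker[OF fin] unfolding D_def K_def N_def .
  have Dsub: "D \<subseteq> carrier G" unfolding D_def by auto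
  have finD: "finite D" using Dsub fin finite_subset by blast
  have finK: "finite K" using fin unfolding K_def by simp
  have oneD: "\<one> \<in> D" unfolding D_def by (rule image_eqI[where x="\<one>"]) simp_all
  have invD: "inv y \<in> D" if "y \<in> D" for y
  proof -
    from that obtain x where x: "x \<in> carrier G" "y = x \<otimes> x" unfolding D_def by auto
    then have "inv y = inv x \<otimes> inv x" by (simp add: inv_mult_group)
    then show ?thesis unfolding D_def using x by auto
  qed
  have sqD: "d \<otimes> (x \<otimes> x) \<in> D" if "d \<in> D" "x \<in> carrier G" for d x
  proof -
    from that obtain y where y: "y \<in> carrier G" "d = y \<otimes> y" unfolding D_def by auto
    have "d \<otimes> (x \<otimes> x) = (y \<otimes> x) \<otimes> (y \<otimes> x)" using y that by (simp add: m_ac)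
    then show ?thesis unfolding D_def using y that by auto
  qed
  have Npos: "N > 0" using fin one_closed unfolding N_def by (metis card_gt_0_iff empty_iff)
  have evN: "even N" using four unfolding N_def by (metis dvd_trans even_numeral)
  obtain d where d: "d \<in> carrier G" "d \<noteq> \<one>" "d \<otimes> d = \<one>"
  proof -
    have "\<not> odd N" using evN by simp
    then have "\<not> (\<forall>y. y \<in> carrier G \<longrightarrow> y \<otimes> y = \<one> \<longrightarrow> y = \<one>)"
      using odd_card_noinv[OF fin subset_refl one_closed] unfolding N_def by auto
    then show ?thesis using that by blast
  qed
  have dK: "d \<in> K" "\<one> \<in> K" using d unfolding K_def by auto
  have cK2: "card K \<ge> 2"
  proof -
    have "{\<one>, d} \<subseteq> K" using dK by auto
    then have "card {\<one>, d} \<le> card K" using finK card_mono by blast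
    then show ?thesis using d by simp
  qed
  show ?thesis
  proof (cases "\<exists>e\<in>D. e \<noteq> \<one> \<and> e \<otimes> e = \<one>")
    case True
    then obtain e where e: "e \<in> D" "e \<noteq> \<one>" "e \<otimes> e = \<one>" by blast
    have "card D < N"
    proof -
      have "card D * 2 \<le> N" using DK cK2 by (metis mult_le_mono2)
      moreover have "card D > 0" using finD oneD card_gt_0_iff by blast
      ultimately show ?thesis by linarith
    qed
    then have "D \<noteq> carrier G" unfolding N_def by auto
    then obtain \<sigma> where s: "\<sigma> \<in> carrier G" "\<sigma> \<notin> D" using Dsub by blast
    have "\<forall>x\<in>carrier G. x \<otimes> x \<noteq> \<sigma> \<and> e \<otimes> (x \<otimes> x) \<noteq> \<sigma>"
      using s sqD[OF e(1)] unfolding D_def by auto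
    then show ?thesis using e s Dsub by blast
  next
    case False
    have "card K \<ge> 3"
    proof (rule ccontr)
      assume "\<not> card K \<ge> 3"
      then have "card K = 2" using cK2 by simp
      then have "N = 2 * card D" using DK by simp
      then have "even (card D)" using four unfolding N_def
        by (metis dvd_mult_cancel_left even_mult_iff mult_2 numeral_Bit0 zero_neq_numeral dvd_times_left_cancel_iff)
      moreover have "odd (card D)"
        using odd_card_noinv[OF finD Dsub oneD invD] False by blast
      ultimately show False by simp
    qed
    then have "card D * 3 \<le> N" using DK by (metis mult_le_mono2)
    moreover have "card (D \<union> (\<lambda>x. d \<otimes> x) ` D) \<le> card D + card D"
      by (metis card_Un_le card_image_le finD le_trans add_left_mono)
    ultimately have "card (D \<union> (\<lambda>x. d \<otimes> x) ` D) < N" using Npos by linarith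
    then have "D \<union> (\<lambda>x. d \<otimes> x) ` D \<noteq> carrier G" unfolding N_def by auto
    moreover have "D \<union> (\<lambda>x. d \<otimes> x) ` D \<subseteq> carrier G" using Dsub d by auto
    ultimately obtain \<sigma> where s: "\<sigma> \<in> carrier G" "\<sigma> \<notin> D \<union> (\<lambda>x. d \<otimes> x) ` D" by blast
    have "\<forall>x\<in>carrier G. x \<otimes> x \<noteq> \<sigma> \<and> d \<otimes> (x \<otimes> x) \<noteq> \<sigma>"
      using s unfolding D_def by auto
    then show ?thesis using d s by blast
  qed
qed

end

definition pa :: "nat \<Rightarrow> nat \<Rightarrow> nat" where "pa h p = p div (4*h)"
definition pb :: "nat \<Rightarrow> nat \<Rightarrow> nat" where "pb h p = p div (2*h) mod 2"
definition pe :: "nat \<Rightarrow> nat \<Rightarrow> nat" where "pe h p = p mod (2*h) div 2"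
definition pf :: "nat \<Rightarrow> nat" where "pf p = p mod 2"
definition enc :: "nat \<Rightarrow> nat \<Rightarrow> nat \<Rightarrow> nat \<Rightarrow> nat \<Rightarrow> nat" where
  "enc h a b e f = 4*h*a + 2*h*b + 2*e + f"

lemma divmod_aux:
  fixes d q r :: nat assumes "r < d" shows "(d*q + r) div d = q" "(d*q + r) mod d = r"
  using assms by simp_all

lemma enc_decode:
  assumes "0 < h" "b < 2" "e < h" "f < 2"
  shows "pa h (enc h a b e f) = a" "pb h (enc h a b e f) = b" "pe h (enc h a b e f) = e"
        "pf (enc h a b e f) = f"
proof -
  have E: "enc h a b e f = (2*h) * (2*a + b) + (2*e + f)" unfolding enc_def by (simp add: algebra_simps)
  have r: "2*e + f < 2*h" using assms by simp
  have D: "enc h a b e f div (2*h) = 2*a + b" unfolding E using divmod_aux(1)[OF r] .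
  have M: "enc h a b e f mod (2*h) = 2*e + f" unfolding E using divmod_aux(2)[OF r] .
  show "pa h (enc h a b e f) = a" unfolding pa_def
  proof -
    have "enc h a b e f div (4*h) = enc h a b e f div (2*h) div 2"
      using div_mult2_eq[of "enc h a b e f" "2*h" 2] by (simp add: mult.commute mult.left_commute)
    then show "enc h a b e f div (4*h) = a" using D assms(2) by auto
  qed
  show "pb h (enc h a b e f) = b" unfolding pb_def D using assms by simp
  show "pe h (enc h a b e f) = e" unfolding pe_def M using assms by simp
  show "pf (enc h a b e f) = f" unfolding pf_def using assms
    by (metis E mod_mult_self3 mod_less mult.assoc mult.commute mod_mult_self2 add.commute)
qed

lemma decode_enc:
  assumes "0 < h"
  shows "enc h (pa h p) (pb h p) (pe h p) (pf p) = p"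
proof -
  have "p = (4*h) * (p div (4*h)) + p mod (4*h)" by simp
  moreover have "p mod (4*h) = (2*h) * (p div (2*h) mod 2) + p mod (2*h)"
    using mod_mult2_eq[of p "2*h" 2] by (simp add: mult.commute mult.left_commute)
  moreover have "p mod (2*h) = 2 * (p mod (2*h) div 2) + p mod 2"
    by (metis div_mult_mod_eq mod_mod_cancel dvd_triv_left mult.commute)
  ultimately show ?thesis unfolding enc_def pa_def pb_def pe_def pf_def by linarith
qed

lemma decode_bounds:
  assumes "0 < h"
  shows "pb h p < 2" "pe h p < h" "pf p < 2"
proof -
  show "pb h p < 2" "pf p < 2" unfolding pb_def pf_def by auto
  have "p mod (2*h) < h * 2" using assms by (simp add: mult.commute)
  then show "pe h p < h" unfolding pe_def using less_mult_imp_div_less by blast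
qed

lemma enc_lt: assumes "0 < h" "b < 2" "e < h" "f < 2"
  shows "enc h a b e f < 4*h*L \<longleftrightarrow> a < L"
proof
  assume "enc h a b e f < 4*h*L"
  then have "4*h*a < 4*h*L" unfolding enc_def by linarith
  then show "a < L" by simp
next
  assume "a < L"
  then have "a + 1 \<le> L" by simp
  then have "4*h*(a+1) \<le> 4*h*L" by (metis mult_le_mono2)
  moreover have "2*h*b + 2*e + f < 4*h" using assms by (cases b) auto
  ultimately show "enc h a b e f < 4*h*L" unfolding enc_def by (simp add: algebra_simps)
qed

definition rct :: "nat \<Rightarrow> nat \<Rightarrow> nat" where "rct h p = pa h p * h + pe h p"
definition cor :: "nat \<Rightarrow> nat \<Rightarrow> nat" where "cor h p = pf p + 2 * pb h p"
definition Hp :: "nat \<Rightarrow> nat \<Rightarrow> nat" where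
  "Hp h p = enc h (pa h p) (pb h p) (pe h p) (1 - pf p)"
definition Vp :: "nat \<Rightarrow> nat \<Rightarrow> nat" where
  "Vp h p = enc h (pa h p) (1 - pb h p) (pe h p) (pf p)"

lemma pa_lt: assumes h: "0 < h" and p: "p < 4*h*L" shows "pa h p < L"
proof -
  note bd = decode_bounds[OF h, of p]
  show ?thesis using enc_lt[OF h bd, of "pa h p" L] decode_enc[OF h, of p] p by simp
qed

lemma even_Suc_div: assumes "even s" "even p" shows "Suc p div s = p div s"
proof -
  have "Suc p mod s \<noteq> 0" using assms by (metis dvd_trans even_Suc mod_0_imp_dvd)
  then show ?thesis by (simp add: div_Suc)
qed

lemma add_dvd_mod: assumes "n dvd (c::nat)" shows "(x + c) mod n = x mod n"
  using assms by (metis dvd_imp_mod_0 mod_add_right_eq add_0_right)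

lemma Hp_facts:
  assumes h: "0 < h" and p: "p < 4*h*L"
  shows "Hp h p < 4*h*L" "Hp h (Hp h p) = p" "Hp h p \<noteq> p" "rct h (Hp h p) = rct h p"
    "cor h (Hp h p) = (1 - pf p) + 2 * pb h p"
proof -
  note bd = decode_bounds[OF h, of p]
  have b2: "1 - pf p < 2" by simp
  note dec = enc_decode[OF h bd(1) bd(2) b2, of "pa h p"]
  show "Hp h p < 4*h*L" unfolding Hp_def using enc_lt[OF h bd(1) bd(2) b2] pa_lt[OF h p] by simp
  show "Hp h (Hp h p) = p" unfolding Hp_def dec using bd(3) decode_enc[OF h, of p]
    by (simp add: diff_diff_cancel)
  show "Hp h p \<noteq> p"
  proof
    assume "Hp h p = p"
    then have "pf (Hp h p) = pf p" by simp
    then show False unfolding Hp_def dec using bd(3) by presburger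
  qed
  show "rct h (Hp h p) = rct h p" unfolding rct_def Hp_def dec ..
  show "cor h (Hp h p) = (1 - pf p) + 2 * pb h p" unfolding cor_def Hp_def dec ..
qed

lemma Vp_facts:
  assumes h: "0 < h" and p: "p < 4*h*L"
  shows "Vp h p < 4*h*L" "Vp h (Vp h p) = p" "Vp h p \<noteq> p" "rct h (Vp h p) = rct h p"
    "cor h (Vp h p) = pf p + 2 * (1 - pb h p)"
proof -
  note bd = decode_bounds[OF h, of p]
  have b2: "1 - pb h p < 2" by simp
  note dec = enc_decode[OF h b2 bd(2) bd(3), of "pa h p"]
  show "Vp h p < 4*h*L" unfolding Vp_def using enc_lt[OF h b2 bd(2) bd(3)] pa_lt[OF h p] by simp
  show "Vp h (Vp h p) = p" unfolding Vp_def dec using bd(1) decode_enc[OF h, of p]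
    by (simp add: diff_diff_cancel)
  show "Vp h p \<noteq> p"
  proof
    assume "Vp h p = p"
    then have "pb h (Vp h p) = pb h p" by simp
    then show False unfolding Vp_def dec using bd(1) by presburger
  qed
  show "rct h (Vp h p) = rct h p" unfolding rct_def Vp_def dec ..
  show "cor h (Vp h p) = pf p + 2 * (1 - pb h p)" unfolding cor_def Vp_def dec ..
qed

lemma Hp_row:
  assumes h: "0 < h" and s: "even s"
  shows "Hp h p div s = p div s"
proof -
  note bd = decode_bounds[OF h, of p]
  have E: "p = enc h (pa h p) (pb h p) (pe h p) (pf p)" using decode_enc[OF h] by simp
  show ?thesis
  proof (cases "pf p = 0")
    case True
    then have "Hp h p = Suc p" unfolding Hp_def using E by (simp add: enc_def)
    moreover have "even p" using True unfolding pf_def by auto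
    ultimately show ?thesis using s even_Suc_div by simp
  next
    case False
    then have f1: "pf p = 1" using bd(3) by simp
    then have "p = Suc (Hp h p)" unfolding Hp_def using E by (simp add: enc_def)
    moreover have "even (Hp h p)" using f1 calculation unfolding pf_def by presburger
    ultimately show ?thesis using even_Suc_div[OF s, of "Hp h p"] by simp
  qed
qed

lemma Vp_col:
  assumes h: "0 < h" and n: "n dvd 2*h"
  shows "Vp h p mod n = p mod n"
proof -
  note bd = decode_bounds[OF h, of p]
  have E: "p = enc h (pa h p) (pb h p) (pe h p) (pf p)" using decode_enc[OF h] by simp
  show ?thesis
  proof (cases "pb h p = 0")
    case True
    then have "Vp h p = p + 2*h" unfolding Vp_def using E by (simp add: enc_def)
    then show ?thesis using add_dvd_mod[OF n] by simp
  next
    case False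
    then have "pb h p = 1" using bd(1) by simp
    then have "p = Vp h p + 2*h" unfolding Vp_def using E by (simp add: enc_def)
    then show ?thesis using add_dvd_mod[OF n] by metis
  qed
qed

lemma rct_cor_inj:
  assumes h: "0 < h" and eq: "rct h p = rct h p'" "cor h p = cor h p'"
  shows "p = p'"
proof -
  have A: "rct h x div h = pa h x" "rct h x mod h = pe h x" for x
    unfolding rct_def using decode_bounds(2)[OF h, of x] h by simp_all
  have B: "cor h x mod 2 = pf x" "cor h x div 2 = pb h x" for x
    unfolding cor_def using decode_bounds(3)[OF h, of x] by simp_all
  have "pa h p = pa h p'" "pe h p = pe h p'" using A eq by metis+
  moreover have "pf p = pf p'" "pb h p = pb h p'" using B eq by metis+
  ultimately show ?thesis using decode_enc[OF h, of p] decode_enc[OF h, of p'] by metis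
qed

lemma rct_lt: assumes h: "0 < h" and p: "p < 4*h*L" shows "rct h p < h * L"
proof -
  have "pa h p + 1 \<le> L" using pa_lt[OF h p] by simp
  then have "(pa h p + 1) * h \<le> L * h" by (metis mult_le_mono1)
  then show ?thesis unfolding rct_def using decode_bounds(2)[OF h, of p]
    by (simp add: algebra_simps)
qed

lemma cor_lt: assumes h: "0 < h" shows "cor h p < 4"
  unfolding cor_def using decode_bounds[OF h, of p] by auto

definition orb :: "('a, 'b) monoid_scheme \<Rightarrow> 'a \<Rightarrow> 'a \<Rightarrow> 'a \<Rightarrow> 'a set" where
  "orb G \<sigma> d x = {x, \<sigma> \<otimes>\<^bsub>G\<^esub> inv\<^bsub>G\<^esub> x, \<sigma> \<otimes>\<^bsub>G\<^esub> d \<otimes>\<^bsub>G\<^esub> inv\<^bsub>G\<^esub> x, d \<otimes>\<^bsub>G\<^esub> x}"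

definition Fv :: "('a, 'b) monoid_scheme \<Rightarrow> 'a \<Rightarrow> 'a \<Rightarrow> 'a \<Rightarrow> nat \<Rightarrow> 'a" where
  "Fv G \<sigma> d x c = (if c = 0 then x else if c = 1 then \<sigma> \<otimes>\<^bsub>G\<^esub> inv\<^bsub>G\<^esub> x
     else if c = 2 then \<sigma> \<otimes>\<^bsub>G\<^esub> d \<otimes>\<^bsub>G\<^esub> inv\<^bsub>G\<^esub> x else d \<otimes>\<^bsub>G\<^esub> x)"

locale dsig = comm_group +
  fixes \<sigma> d
  assumes sc: "\<sigma> \<in> carrier G" and dc: "d \<in> carrier G" and dd: "d \<otimes> d = \<one>" and d1: "d \<noteq> \<one>"
    and nsq: "\<And>x. x \<in> carrier G \<Longrightarrow> x \<otimes> x \<noteq> \<sigma>"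
    and nsq2: "\<And>x. x \<in> carrier G \<Longrightarrow> d \<otimes> (x \<otimes> x) \<noteq> \<sigma>"
begin

lemma invd: "inv d = d"
  using dd dc by (metis inv_equality)

lemma canc3: "a \<in> carrier G \<Longrightarrow> b \<in> carrier G \<Longrightarrow> c \<in> carrier G \<Longrightarrow>
   a \<otimes> (b \<otimes> (c \<otimes> inv a)) = b \<otimes> c"
  by (metis inv_closed m_assoc m_closed m_lcomm r_inv r_one)

lemma canc2: "a \<in> carrier G \<Longrightarrow> b \<in> carrier G \<Longrightarrow> a \<otimes> (b \<otimes> inv a) = b"
  by (metis inv_closed m_lcomm r_inv r_one)

lemma orb_sub: "x \<in> carrier G \<Longrightarrow> orb G \<sigma> d x \<subseteq> carrier G"
  unfolding orb_def using sc dc by auto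

lemma orb_self: "x \<in> orb G \<sigma> d x" unfolding orb_def by simp

lemma orb_sub2:
  assumes x: "x \<in> carrier G" and y: "y \<in> orb G \<sigma> d x"
  shows "orb G \<sigma> d y \<subseteq> orb G \<sigma> d x \<and> x \<in> orb G \<sigma> d y"
proof -
  have dl: "d \<otimes> (d \<otimes> z) = z" if "z \<in> carrier G" for z
    using that dd dc by (simp add: m_assoc[symmetric])
  consider "y = x" | "y = \<sigma> \<otimes> inv x" | "y = \<sigma> \<otimes> d \<otimes> inv x" | "y = d \<otimes> x"
    using y unfolding orb_def by auto
  then show ?thesis
  proof cases
    case 1 then show ?thesis using orb_self by auto
  next
    case 2
    have a: "\<sigma> \<otimes> inv y = x" using x sc 2 by (simp add: inv_mult_group m_lcomm[of \<sigma> x "inv \<sigma>"])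
    have b: "\<sigma> \<otimes> d \<otimes> inv y = d \<otimes> x" using x sc dc 2 by (simp add: inv_mult_group m_assoc canc3)
    have c: "d \<otimes> y = \<sigma> \<otimes> d \<otimes> inv x" using x sc dc 2 by (simp add: m_ac)
    show ?thesis unfolding orb_def a b c 2[symmetric] by auto
  next
    case 3
    have a: "\<sigma> \<otimes> inv y = d \<otimes> x" using x sc dc 3 invd by (simp add: inv_mult_group m_assoc canc3 m_comm[of x d])
    have b: "\<sigma> \<otimes> d \<otimes> inv y = x" using x sc dc 3 invd by (simp add: inv_mult_group m_assoc dl canc2 m_lcomm[of x d "inv \<sigma>"])
    have c: "d \<otimes> y = \<sigma> \<otimes> inv x" using x sc dc 3 by (simp add: dl dd m_ac)
    show ?thesis unfolding orb_def a b c 3[symmetric] by auto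
  next
    case 4
    have a: "\<sigma> \<otimes> inv y = \<sigma> \<otimes> d \<otimes> inv x" using x sc dc 4 invd by (simp add: inv_mult_group m_ac)
    have b: "\<sigma> \<otimes> d \<otimes> inv y = \<sigma> \<otimes> inv x" using x sc dc 4 invd by (simp add: dl inv_mult_group m_ac)
    have c: "d \<otimes> y = x" using x dc 4 dl by simp
    show ?thesis unfolding orb_def a b c 4[symmetric] by auto
  qed
qed

lemma orb_eq:
  assumes x: "x \<in> carrier G" and y: "y \<in> orb G \<sigma> d x"
  shows "orb G \<sigma> d y = orb G \<sigma> d x"
proof
  show "orb G \<sigma> d y \<subseteq> orb G \<sigma> d x" using orb_sub2[OF x y] by simp
  have yc: "y \<in> carrier G" using orb_sub[OF x] y by auto
  show "orb G \<sigma> d x \<subseteq> orb G \<sigma> d y" using orb_sub2[OF yc] orb_sub2[OF x y] by simp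
qed

lemma Fv_in: "c < 4 \<Longrightarrow> Fv G \<sigma> d x c \<in> orb G \<sigma> d x"
  unfolding Fv_def orb_def by auto

lemma Fv_closed: "x \<in> carrier G \<Longrightarrow> Fv G \<sigma> d x c \<in> carrier G"
  unfolding Fv_def using sc dc by auto

lemma distinct4:
  assumes x: "x \<in> carrier G"
  shows "x \<noteq> \<sigma> \<otimes> inv x" "x \<noteq> \<sigma> \<otimes> d \<otimes> inv x" "x \<noteq> d \<otimes> x"
    "\<sigma> \<otimes> inv x \<noteq> \<sigma> \<otimes> d \<otimes> inv x" "\<sigma> \<otimes> inv x \<noteq> d \<otimes> x" "\<sigma> \<otimes> d \<otimes> inv x \<noteq> d \<otimes> x"
proof -
  have dl: "d \<otimes> (d \<otimes> z) = z" if "z \<in> carrier G" for z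
    using that dd dc by (simp add: m_assoc[symmetric])
  show "x \<noteq> \<sigma> \<otimes> inv x"
  proof
    assume e: "x = \<sigma> \<otimes> inv x"
    have "x \<otimes> x = \<sigma> \<otimes> inv x \<otimes> x" using e by simp
    also have "\<dots> = \<sigma>" using x sc by (simp add: m_assoc)
    finally show False using nsq[OF x] by simp
  qed
  show "x \<noteq> \<sigma> \<otimes> d \<otimes> inv x"
  proof
    assume e: "x = \<sigma> \<otimes> d \<otimes> inv x"
    have "d \<otimes> (x \<otimes> x) = d \<otimes> (\<sigma> \<otimes> d \<otimes> inv x \<otimes> x)" using e by simp
    also have "\<dots> = \<sigma>" using x sc dc by (simp add: dl dd m_ac)
    finally show False using nsq2[OF x] by simp
  qed
  show "x \<noteq> d \<otimes> x"
    using d1 x dc by simp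
  show "\<sigma> \<otimes> inv x \<noteq> \<sigma> \<otimes> d \<otimes> inv x"
    using d1 x dc sc by (simp add: m_assoc)
  show "\<sigma> \<otimes> inv x \<noteq> d \<otimes> x"
  proof
    assume e: "\<sigma> \<otimes> inv x = d \<otimes> x"
    have "d \<otimes> (x \<otimes> x) = (d \<otimes> x) \<otimes> x" using x dc by (simp add: m_assoc)
    also have "\<dots> = \<sigma> \<otimes> inv x \<otimes> x" using e by simp
    also have "\<dots> = \<sigma>" using x sc by (simp add: m_assoc)
    finally show False using nsq2[OF x] by simp
  qed
  show "\<sigma> \<otimes> d \<otimes> inv x \<noteq> d \<otimes> x"
  proof
    assume e: "\<sigma> \<otimes> d \<otimes> inv x = d \<otimes> x"
    have "x \<otimes> x = d \<otimes> ((d \<otimes> x) \<otimes> x)" using x dc by (simp add: dl m_assoc)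
    also have "\<dots> = d \<otimes> (\<sigma> \<otimes> d \<otimes> inv x \<otimes> x)" using e by simp
    also have "\<dots> = \<sigma>" using x sc dc by (simp add: dl dd m_ac)
    finally show False using nsq[OF x] by simp
  qed
qed

lemma Fv_inj:
  assumes x: "x \<in> carrier G" and c: "c < 4" "c' < 4" and e: "Fv G \<sigma> d x c = Fv G \<sigma> d x c'"
  shows "c = c'"
  using distinct4[OF x] c e unfolding Fv_def
  by (auto split: if_splits)

lemma Fv_H:
  assumes x: "x \<in> carrier G" and "f < 2" "b < 2"
  shows "Fv G \<sigma> d x (f + 2*b) \<otimes> Fv G \<sigma> d x ((1 - f) + 2*b) = \<sigma>"
proof -
  have dl: "d \<otimes> (d \<otimes> z) = z" if "z \<in> carrier G" for z
    using that dd dc by (simp add: m_assoc[symmetric])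
  have "f = 0 \<or> f = 1" "b = 0 \<or> b = 1" using assms by auto
  then show ?thesis unfolding Fv_def using x sc dc by (auto simp: dl dd m_ac)
qed

lemma Fv_V:
  assumes x: "x \<in> carrier G" and "f < 2" "b < 2"
  shows "Fv G \<sigma> d x (f + 2*b) \<otimes> Fv G \<sigma> d x (f + 2*(1 - b)) = \<sigma> \<otimes> d"
proof -
  have dl: "d \<otimes> (d \<otimes> z) = z" if "z \<in> carrier G" for z
    using that dd dc by (simp add: m_assoc[symmetric])
  have "f = 0 \<or> f = 1" "b = 0 \<or> b = 1" using assms by auto
  then show ?thesis unfolding Fv_def using x sc dc by (auto simp: dl dd m_ac)
qed

end

context dsig begin

lemma orb_disj:
  assumes x: "x \<in> carrier G" and y: "y \<in> carrier G" and z: "z \<in> orb G \<sigma> d x" "z \<in> orb G \<sigma> d y"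
  shows "orb G \<sigma> d x = orb G \<sigma> d y"
  using orb_eq[OF x z(1)] orb_eq[OF y z(2)] by simp

lemma orb_card: assumes x: "x \<in> carrier G" shows "card (orb G \<sigma> d x) = 4"
  using distinct4[OF x] unfolding orb_def by simp

lemma card_Orb:
  assumes fin: "finite (carrier G)"
  shows "card (carrier G) = 4 * card (orb G \<sigma> d ` carrier G)"
proof -
  define Orb where "Orb = orb G \<sigma> d ` carrier G"
  have U: "\<Union>Orb = carrier G" unfolding Orb_def using orb_sub orb_self by blast
  have finO: "finite Orb" unfolding Orb_def using fin by simp
  have "card (\<Union>Orb) = sum card Orb"
  proof (rule card_Union_disjoint)
    show "pairwise disjnt Orb" unfolding pairwise_def disjnt_def Orb_def
      using orb_disj by blast
    show "\<And>A. A \<in> Orb \<Longrightarrow> finite A" unfolding Orb_def by (auto simp: orb_def)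
  qed
  also have "\<dots> = sum (\<lambda>_. 4) Orb" by (rule sum.cong) (auto simp: Orb_def orb_card)
  finally show ?thesis using U unfolding Orb_def by simp
qed

end

lemma pos_inj:
  fixes p p' s n :: nat
  assumes s: "0 < s" "s \<le> n" and e: "p div s = p' div s" "p mod n = p' mod n"
  shows "p = p'"
proof -
  have key: "x = y" if xy: "x \<le> y" "x div s = y div s" "x mod n = y mod n" for x y :: nat
  proof -
    have "y - x < s"
    proof -
      have "x = s * (x div s) + x mod s" "y = s * (x div s) + y mod s" using mult_div_mod_eq[of s x] mult_div_mod_eq[of s y] xy(2) by simp_all
      moreover have "y mod s < s" using s by simp
      ultimately show ?thesis by linarith
    qed
    moreover have "n dvd y - x" using xy mod_eq_dvd_iff_nat[of x y n] by simp
    ultimately have "y - x = 0" using s by (metis dvd_imp_le leD le_trans not_gr0)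
    then show ?thesis using xy(1) by simp
  qed
  show ?thesis
  proof (cases "p \<le> p'")
    case True then show ?thesis using key e by blast
  next
    case False then show ?thesis using key[of p' p] e by simp
  qed
qed

lemma row_set:
  fixes s m i :: nat
  assumes "0 < s" "i < m"
  shows "{p. p < m*s \<and> p div s = i} = {i*s..<i*s+s}"
proof -
  have bnd: "i*s + s \<le> m*s" using assms by (metis add.commute mult_Suc mult_le_mono1 Suc_leI)
  have eq: "p div s = i \<longleftrightarrow> i*s \<le> p \<and> p < i*s+s" for p
    using assms(1) by (metis add.commute div_nat_eqI div_times_less_eq_dividend
      mult.commute mult_Suc dividend_less_times_div)
  show ?thesis
  proof (intro equalityI subsetI)
    fix p assume "p \<in> {p. p < m*s \<and> p div s = i}"
    then show "p \<in> {i*s..<i*s+s}" using eq[of p] by simp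
  next
    fix p assume "p \<in> {i*s..<i*s+s}"
    then show "p \<in> {p. p < m*s \<and> p div s = i}" using eq[of p] bnd by simp
  qed
qed

lemma col_set:
  fixes n k j :: nat
  assumes "j < n"
  shows "{p. p < n*k \<and> p mod n = j} = (\<lambda>r. j + n*r) ` {..<k}"
proof
  show "{p. p < n*k \<and> p mod n = j} \<subseteq> (\<lambda>r. j + n*r) ` {..<k}"
  proof
    fix p assume p: "p \<in> {p. p < n*k \<and> p mod n = j}"
    have "n * (p div n) + p mod n = p" by (rule mult_div_mod_eq)
    moreover have "p mod n = j" using p by simp
    ultimately have "p = j + n * (p div n)" by linarith
    moreover have "p div n < k" using p by (simp add: less_mult_imp_div_less mult.commute)
    ultimately show "p \<in> (\<lambda>r. j + n*r) ` {..<k}" by blast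
  qed
  show "(\<lambda>r. j + n*r) ` {..<k} \<subseteq> {p. p < n*k \<and> p mod n = j}"
  proof
    fix p assume "p \<in> (\<lambda>r. j + n*r) ` {..<k}"
    then obtain r where r: "r < k" "p = j + n*r" by auto
    have "j + n*r < n + n*r" using assms by simp
    also have "\<dots> = n * (Suc r)" by simp
    also have "\<dots> \<le> n * k" using r(1) by (metis Suc_leI mult_le_mono2)
    finally show "p \<in> {p. p < n*k \<and> p mod n = j}" using r assms by simp
  qed
qed

lemma col_card:
  fixes n k j :: nat
  assumes "j < n"
  shows "card {p. p < n*k \<and> p mod n = j} = k"
proof -
  have "inj_on (\<lambda>r. j + n*r) {..<k}" using assms by (auto simp: inj_on_def)
  then show ?thesis unfolding col_set[OF assms] by (simp add: card_image)
qed

lemma params: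
  fixes m n s k :: nat
  assumes "2 \<le> s" "s \<le> n" "m * s = n * k"
    and cnd: "(s mod 4 = 0 \<and> k mod 4 = 0)
         \<or> (s mod 4 = 2 \<and> k mod 4 = 0)
         \<or> (s mod 4 = 0 \<and> k mod 4 = 2)
         \<or> (s mod 4 = 2 \<and> k mod 4 = 2 \<and> even m \<and> even n)"
  shows "\<exists>h L. 0 < h \<and> n*k = 4*h*L \<and> n dvd 2*h \<and> s \<le> 2*h"
proof (cases "k mod 4 = 0")
  case True
  then obtain L where "k = 4*L" by (metis dvd_def mod_0_imp_dvd)
  then have "0 < n \<and> n*k = 4*n*L \<and> n dvd 2*n \<and> s \<le> 2*n" using assms by auto
  then show ?thesis by blast
next
  case False
  then have k2: "k mod 4 = 2" using cnd by auto
  have evn: "even n"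
  proof (rule ccontr)
    assume odd: "odd n"
    have "s mod 4 = 0" using cnd k2 odd by auto
    then have "(m*s) mod 4 = 0" by (metis mod_mult_right_eq mult_0_right mod_0)
    then have A: "(n*k) mod 4 = 0" using assms(3) by simp
    have "n mod 4 = 1 \<or> n mod 4 = 3" using odd by presburger
    moreover have "(n*k) mod 4 = ((n mod 4) * (k mod 4)) mod 4" by (simp add: mod_mult_eq)
    ultimately have "(n*k) mod 4 = 2" using k2 by auto
    then show False using A by simp
  qed
  have evk: "even k" using k2 by presburger
  obtain h where h: "n = 2*h" using evn by blast
  obtain L where L: "k = 2*L" using evk by blast
  have "0 < h \<and> n*k = 4*h*L \<and> n dvd 2*h \<and> s \<le> 2*h" using h L assms by auto
  then show ?thesis by blast
qed

theorem proposition5p15: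
  fixes G :: "('a, 'b) monoid_scheme" and m n s k c :: nat
  assumes "2 \<le> s" and "s \<le> n" and "2 \<le> k" and "k \<le> m" and "m * s = n * k"
    and "1 \<le> c"
    and "comm_group G" and "finite (carrier G)" and "card (carrier G) = n * k * c"
    and "(s mod 4 = 0 \<and> k mod 4 = 0)
         \<or> (s mod 4 = 2 \<and> k mod 4 = 0)
         \<or> (s mod 4 = 0 \<and> k mod 4 = 2)
         \<or> (s mod 4 = 2 \<and> k mod 4 = 2 \<and> even m \<and> even n)"
  shows "MRS_exists G m n s k c"
proof -
  interpret CG: comm_group G by fact
  have s0: "0 < s" and n0: "0 < n" using assms(1,2) by auto
  have "s mod 4 = 0 \<or> s mod 4 = 2" "k mod 4 = 0 \<or> k mod 4 = 2" using assms(10) by auto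
  then have evs: "even s" and evk: "even k" by presburger+
  obtain h L where hL: "0 < h" "n*k = 4*h*L" "n dvd 2*h" "s \<le> 2*h"
    using params[OF assms(1,2,5,10)] by blast
  define R where "R = h * L"
  define NK where "NK = n * k"
  have NK: "NK = 4*h*L" "NK = m * s" using hL assms(5) unfolding NK_def by simp_all
  have cardG: "card (carrier G) = 4 * (c * R)" using assms(9) hL unfolding R_def by simp
  then have "4 dvd card (carrier G)" by simp
  then obtain d \<sigma> where ds: "d \<in> carrier G" "\<sigma> \<in> carrier G" "d \<noteq> \<one>\<^bsub>G\<^esub>" "d \<otimes>\<^bsub>G\<^esub> d = \<one>\<^bsub>G\<^esub>"
    "\<And>x. x \<in> carrier G \<Longrightarrow> x \<otimes>\<^bsub>G\<^esub> x \<noteq> \<sigma>"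
    "\<And>x. x \<in> carrier G \<Longrightarrow> d \<otimes>\<^bsub>G\<^esub> (x \<otimes>\<^bsub>G\<^esub> x) \<noteq> \<sigma>"
    using CG.exists_d_sigma[OF assms(8)] by blast
  interpret D: dsig G \<sigma> d
    by unfold_locales (use ds in auto)
  define Orb where "Orb = orb G \<sigma> d ` carrier G"
  have cOrb: "card Orb = c * R" using D.card_Orb[OF assms(8)] cardG unfolding Orb_def by simp
  have finOrb: "finite Orb" unfolding Orb_def using assms(8) by simp
  obtain hq where hq: "bij_betw hq {0..<card Orb} Orb" using ex_bij_betw_nat_finite[OF finOrb] by blast
  define rep where "rep q = (SOME x. x \<in> carrier G \<and> orb G \<sigma> d x = hq q)" for q
  have rep: "rep q \<in> carrier G \<and> orb G \<sigma> d (rep q) = hq q" if "q < c * R" for q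
  proof -
    have "hq q \<in> Orb" using hq that cOrb unfolding bij_betw_def by auto
    then have "\<exists>x. x \<in> carrier G \<and> orb G \<sigma> d x = hq q" unfolding Orb_def by auto
    then show ?thesis unfolding rep_def by (rule someI_ex)
  qed
  define \<Phi> where "\<Phi> t p = Fv G \<sigma> d (rep (t * R + rct h p)) (cor h p)" for t p
  have rctR: "rct h p < R" if "p < NK" for p
    using rct_lt[OF hL(1)] that NK unfolding R_def by simp
  have qlt: "t * R + rct h p < c * R" if "t < c" "p < NK" for t p
  proof -
    have "t * R + rct h p < t * R + R" using rctR[OF that(2)] by simp
    also have "\<dots> = Suc t * R" by simp
    also have "\<dots> \<le> c * R" using that(1) by (metis Suc_leI mult_le_mono1)
    finally show ?thesis .
  qed
  have \<Phi>c: "\<Phi> t p \<in> carrier G" if "t < c" "p < NK" for t p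
    unfolding \<Phi>_def using D.Fv_closed rep[OF qlt[OF that]] by blast
  have \<Phi>inj: "t = t' \<and> p = p'" if tp: "t < c" "t' < c" "p < NK" "p' < NK" and e: "\<Phi> t p = \<Phi> t' p'"
    for t t' p p'
  proof -
    define q where "q = t * R + rct h p"
    define q' where "q' = t' * R + rct h p'"
    have q: "q < c * R" "q' < c * R" unfolding q_def q'_def using qlt tp by auto
    have i1: "\<Phi> t p \<in> orb G \<sigma> d (rep q)" unfolding \<Phi>_def q_def[symmetric]
      by (rule D.Fv_in[OF cor_lt[OF hL(1)]])
    have i2': "\<Phi> t' p' \<in> orb G \<sigma> d (rep q')" unfolding \<Phi>_def q'_def[symmetric]
      by (rule D.Fv_in[OF cor_lt[OF hL(1)]])
    have i2: "\<Phi> t p \<in> orb G \<sigma> d (rep q')" using i2' e by simp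
    have "orb G \<sigma> d (rep q) = orb G \<sigma> d (rep q')"
      using D.orb_disj[OF conjunct1[OF rep[OF q(1)]] conjunct1[OF rep[OF q(2)]] i1 i2] .
    then have "hq q = hq q'" using rep[OF q(1)] rep[OF q(2)] by simp
    moreover have "inj_on hq {0..<card Orb}" using hq unfolding bij_betw_def by simp
    ultimately have qq: "q = q'" using q cOrb by (simp add: inj_on_eq_iff)
    then have "Fv G \<sigma> d (rep q) (cor h p) = Fv G \<sigma> d (rep q) (cor h p')"
      using e unfolding \<Phi>_def q_def q'_def by simp
    then have cc: "cor h p = cor h p'" using D.Fv_inj rep[OF q(1)] cor_lt[OF hL(1)] by blast
    have R0: "0 < R" using rctR[OF tp(3)] by simp
    have "q div R = t" "q mod R = rct h p" unfolding q_def using rctR[OF tp(3)] R0 by simp_all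
    moreover have "q' div R = t'" "q' mod R = rct h p'" unfolding q'_def using rctR[OF tp(4)] R0 by simp_all
    ultimately have "t = t'" "rct h p = rct h p'" using qq by auto
    then show ?thesis using rct_cor_inj[OF hL(1) _ cc] by simp
  qed
  have \<Phi>surj: "\<exists>t<c. \<exists>p<NK. \<Phi> t p = g" if g: "g \<in> carrier G" for g
  proof -
    define Dm where "Dm = {..<c} \<times> {..<NK}"
    have inj: "inj_on (\<lambda>(t, p). \<Phi> t p) Dm" unfolding Dm_def inj_on_def using \<Phi>inj by auto
    have sub: "(\<lambda>(t, p). \<Phi> t p) ` Dm \<subseteq> carrier G" unfolding Dm_def using \<Phi>c by auto
    have "card ((\<lambda>(t, p). \<Phi> t p) ` Dm) = card (carrier G)"
      using card_image[OF inj] assms(9) unfolding Dm_def NK_def by (simp add: mult.commute)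
    then have "(\<lambda>(t, p). \<Phi> t p) ` Dm = carrier G" using sub assms(8) by (simp add: card_subset_eq)
    then have "g \<in> (\<lambda>(t, p). \<Phi> t p) ` Dm" using g by simp
    then obtain t p where "(t, p) \<in> Dm" "\<Phi> t p = g" by auto
    then show ?thesis unfolding Dm_def by auto
  qed
  define A where "A t i j = (if \<exists>p<NK. p div s = i \<and> p mod n = j
      then Some (\<Phi> t (THE p. p < NK \<and> p div s = i \<and> p mod n = j)) else None)" for t i j
  have Aval: "A t (p div s) (p mod n) = Some (\<Phi> t p)" if "p < NK" for t p
  proof -
    have "(THE p'. p' < NK \<and> p' div s = p div s \<and> p' mod n = p mod n) = p"
    proof (rule the_equality)
      show "p < NK \<and> p div s = p div s \<and> p mod n = p mod n" using that by simp
      fix p' assume "p' < NK \<and> p' div s = p div s \<and> p' mod n = p mod n"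
      then show "p' = p" using pos_inj[OF s0 assms(2), of p' p] by simp
    qed
    then show ?thesis unfolding A_def using that by auto
  qed
  have Avali: "A t i j = Some (\<Phi> t p)" if "p < NK" "p div s = i" "p mod n = j" for t i j p
    using Aval[OF that(1), of t] that(2,3) by simp
  have Anone: "A t i j \<noteq> None \<longleftrightarrow> (\<exists>p<NK. p div s = i \<and> p mod n = j)" for t i j
    unfolding A_def by simp
  have rowset: "{j. j < n \<and> A t i j \<noteq> None} = (\<lambda>p. p mod n) ` {p. p < NK \<and> p div s = i}" for t i
  proof (intro equalityI subsetI)
    fix j assume "j \<in> {j. j < n \<and> A t i j \<noteq> None}"
    then obtain p where "p < NK" "p div s = i" "p mod n = j" unfolding Anone by blast
    then show "j \<in> (\<lambda>p. p mod n) ` {p. p < NK \<and> p div s = i}" by blast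
  next
    fix j assume "j \<in> (\<lambda>p. p mod n) ` {p. p < NK \<and> p div s = i}"
    then obtain p where "p < NK" "p div s = i" "j = p mod n" by blast
    moreover have "p mod n < n" using n0 by simp
    ultimately show "j \<in> {j. j < n \<and> A t i j \<noteq> None}" unfolding Anone by blast
  qed
  have rowinj: "inj_on (\<lambda>p. p mod n) {p. p < NK \<and> p div s = i}" for i
  proof (rule inj_onI)
    fix x y assume a: "x \<in> {p. p < NK \<and> p div s = i}" "y \<in> {p. p < NK \<and> p div s = i}" "x mod n = y mod n"
    have "x div s = y div s" using a(1,2) by simp
    from pos_inj[OF s0 assms(2) this a(3)] show "x = y" .
  qed
  have pdm: "p div s < m" if "p < NK" for p
    using that NK(2) s0 by (simp add: less_mult_imp_div_less)
  have colset: "{i. i < m \<and> A t i j \<noteq> None} = (\<lambda>p. p div s) ` {p. p < NK \<and> p mod n = j}" for t j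
  proof (intro equalityI subsetI)
    fix i assume "i \<in> {i. i < m \<and> A t i j \<noteq> None}"
    then obtain p where "p < NK" "p div s = i" "p mod n = j" unfolding Anone by blast
    then show "i \<in> (\<lambda>p. p div s) ` {p. p < NK \<and> p mod n = j}" by blast
  next
    fix i assume "i \<in> (\<lambda>p. p div s) ` {p. p < NK \<and> p mod n = j}"
    then obtain p where "p < NK" "p mod n = j" "i = p div s" by blast
    moreover have "p div s < m" using pdm calculation(1) by blast
    ultimately show "i \<in> {i. i < m \<and> A t i j \<noteq> None}" unfolding Anone by blast
  qed
  have colinj: "inj_on (\<lambda>p. p div s) {p. p < NK \<and> p mod n = j}" for j
  proof (rule inj_onI)
    fix x y assume a: "x \<in> {p. p < NK \<and> p mod n = j}" "y \<in> {p. p < NK \<and> p mod n = j}" "x div s = y div s"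
    have "x mod n = y mod n" using a(1,2) by simp
    from pos_inj[OF s0 assms(2) a(3) this] show "x = y" .
  qed
  have rowcard: "card {p. p < NK \<and> p div s = i} = s" if "i < m" for i
    using row_set[OF s0 that] NK(2) by simp
  have colcard: "card {p. p < NK \<and> p mod n = j} = k" if "j < n" for j
    using col_card[OF that] unfolding NK_def by simp
  have rowsum: "finprod G (\<lambda>j. the (A t i j)) {j. j < n \<and> A t i j \<noteq> None} = \<sigma> [^]\<^bsub>G\<^esub> (s div 2)"
    if ti: "t < c" "i < m" for t i
  proof -
    define P where "P = {p. p < NK \<and> p div s = i}"
    have "finprod G (\<lambda>j. the (A t i j)) {j. j < n \<and> A t i j \<noteq> None}
        = finprod G (\<lambda>j. the (A t i j)) ((\<lambda>p. p mod n) ` P)" unfolding rowset P_def ..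
    also have "\<dots> = finprod G (\<lambda>p. the (A t i (p mod n))) P"
    proof (rule CG.finprod_reindex)
      show "inj_on (\<lambda>p. p mod n) P" unfolding P_def by (rule rowinj)
      show "(\<lambda>j. the (A t i j)) \<in> (\<lambda>p. p mod n) ` P \<rightarrow> carrier G"
      proof
        fix j assume "j \<in> (\<lambda>p. p mod n) ` P"
        then obtain p where p: "p < NK" "p div s = i" "j = p mod n" unfolding P_def by blast
        have "A t i j = Some (\<Phi> t p)" using Avali p by simp
        then show "the (A t i j) \<in> carrier G" using \<Phi>c[OF ti(1) p(1)] by simp
      qed
    qed
    also have "\<dots> = finprod G (\<Phi> t) P"
    proof (rule CG.finprod_cong')
      show "\<Phi> t \<in> P \<rightarrow> carrier G" unfolding P_def using \<Phi>c ti by simp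
      fix p assume "p \<in> P"
      then have p: "p < NK" "p div s = i" unfolding P_def by simp_all
      show "the (A t i (p mod n)) = \<Phi> t p" using Avali[OF p refl] by simp
    qed simp
    also have "\<dots> = \<sigma> [^]\<^bsub>G\<^esub> (card P div 2)"
    proof (rule CG.finprod_invol[where \<pi> = "Hp h"])
      show "finite P" unfolding P_def by simp
      show "\<Phi> t \<in> P \<rightarrow> carrier G" unfolding P_def using \<Phi>c ti by auto
      show "\<sigma> \<in> carrier G" by fact
      fix p assume p: "p \<in> P"
      then have pl: "p < 4*h*L" "p div s = i" unfolding P_def using NK by auto
      note HF = Hp_facts[OF hL(1) pl(1)]
      show "Hp h p \<in> P" unfolding P_def using HF(1) Hp_row[OF hL(1) evs] pl NK by simp
      show "Hp h (Hp h p) = p" by (rule HF(2))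
      show "Hp h p \<noteq> p" by (rule HF(3))
      show "\<Phi> t p \<otimes>\<^bsub>G\<^esub> \<Phi> t (Hp h p) = \<sigma>"
      proof -
        have pN: "p < NK" using pl NK by simp
        have e1: "\<Phi> t p = Fv G \<sigma> d (rep (t * R + rct h p)) (pf p + 2 * pb h p)"
          unfolding \<Phi>_def cor_def ..
        have e2: "\<Phi> t (Hp h p) = Fv G \<sigma> d (rep (t * R + rct h p)) ((1 - pf p) + 2 * pb h p)"
          unfolding \<Phi>_def HF(4) HF(5) ..
        show ?thesis unfolding e1 e2
          by (rule D.Fv_H[OF conjunct1[OF rep[OF qlt[OF ti(1) pN]]] decode_bounds(3)[OF hL(1)] decode_bounds(1)[OF hL(1)]])
      qed
    qed
    finally show ?thesis using rowcard[OF ti(2)] unfolding P_def by simp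
  qed
  have colsum: "finprod G (\<lambda>i. the (A t i j)) {i. i < m \<and> A t i j \<noteq> None} = (\<sigma> \<otimes>\<^bsub>G\<^esub> d) [^]\<^bsub>G\<^esub> (k div 2)"
    if tj: "t < c" "j < n" for t j
  proof -
    define P where "P = {p. p < NK \<and> p mod n = j}"
    have "finprod G (\<lambda>i. the (A t i j)) {i. i < m \<and> A t i j \<noteq> None}
        = finprod G (\<lambda>i. the (A t i j)) ((\<lambda>p. p div s) ` P)" unfolding colset P_def ..
    also have "\<dots> = finprod G (\<lambda>p. the (A t (p div s) j)) P"
    proof (rule CG.finprod_reindex)
      show "inj_on (\<lambda>p. p div s) P" unfolding P_def by (rule colinj)
      show "(\<lambda>i. the (A t i j)) \<in> (\<lambda>p. p div s) ` P \<rightarrow> carrier G"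
      proof
        fix i assume "i \<in> (\<lambda>p. p div s) ` P"
        then obtain p where p: "p < NK" "p mod n = j" "i = p div s" unfolding P_def by blast
        have "A t i j = Some (\<Phi> t p)" using Avali p by simp
        then show "the (A t i j) \<in> carrier G" using \<Phi>c[OF tj(1) p(1)] by simp
      qed
    qed
    also have "\<dots> = finprod G (\<Phi> t) P"
    proof (rule CG.finprod_cong')
      show "\<Phi> t \<in> P \<rightarrow> carrier G" unfolding P_def using \<Phi>c tj by simp
      fix p assume "p \<in> P"
      then have p: "p < NK" "p mod n = j" unfolding P_def by simp_all
      show "the (A t (p div s) j) = \<Phi> t p" using Avali[OF p(1) refl p(2)] by simp
    qed simp
    also have "\<dots> = (\<sigma> \<otimes>\<^bsub>G\<^esub> d) [^]\<^bsub>G\<^esub> (card P div 2)"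
    proof (rule CG.finprod_invol[where \<pi> = "Vp h"])
      show "finite P" unfolding P_def by simp
      show "\<Phi> t \<in> P \<rightarrow> carrier G" unfolding P_def using \<Phi>c tj by auto
      show "\<sigma> \<otimes>\<^bsub>G\<^esub> d \<in> carrier G" using ds by simp
      fix p assume p: "p \<in> P"
      then have pl: "p < 4*h*L" "p mod n = j" unfolding P_def using NK by auto
      note VF = Vp_facts[OF hL(1) pl(1)]
      show "Vp h p \<in> P" unfolding P_def using VF(1) Vp_col[OF hL(1) hL(3)] pl NK by simp
      show "Vp h (Vp h p) = p" by (rule VF(2))
      show "Vp h p \<noteq> p" by (rule VF(3))
      show "\<Phi> t p \<otimes>\<^bsub>G\<^esub> \<Phi> t (Vp h p) = \<sigma> \<otimes>\<^bsub>G\<^esub> d"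
      proof -
        have pN: "p < NK" using pl NK by simp
        have e1: "\<Phi> t p = Fv G \<sigma> d (rep (t * R + rct h p)) (pf p + 2 * pb h p)"
          unfolding \<Phi>_def cor_def ..
        have e2: "\<Phi> t (Vp h p) = Fv G \<sigma> d (rep (t * R + rct h p)) (pf p + 2 * (1 - pb h p))"
          unfolding \<Phi>_def VF(4) VF(5) ..
        show ?thesis unfolding e1 e2
          by (rule D.Fv_V[OF conjunct1[OF rep[OF qlt[OF tj(1) pN]]] decode_bounds(3)[OF hL(1)] decode_bounds(1)[OF hL(1)]])
      qed
    qed
    finally show ?thesis using colcard[OF tj(2)] unfolding P_def by simp
  qed
  have "is_MRS G m n s k c A"
    unfolding is_MRS_def
  proof (intro conjI)
    show "card (carrier G) = n * k * c" by fact
    show "\<forall>t<c. \<forall>i<m. \<forall>j<n. \<forall>g. A t i j = Some g \<longrightarrow> g \<in> carrier G"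
    proof (intro allI impI)
      fix t i j g assume tc: "t < c" and "i < m" "j < n" and Ag: "A t i j = Some g"
      then obtain p where p: "p < NK" "p div s = i" "p mod n = j" using Anone by blast
      have "g = \<Phi> t p" using Avali[OF p, of t] Ag by simp
      then show "g \<in> carrier G" using \<Phi>c[OF tc p(1)] by simp
    qed
    show "\<forall>g\<in>carrier G. \<exists>!p. p \<in> filled_cells A c m n \<and> (case p of (t, i, j) \<Rightarrow> A t i j = Some g)"
    proof
      fix g assume g: "g \<in> carrier G"
      obtain t p where tp: "t < c" "p < NK" "\<Phi> t p = g" using \<Phi>surj[OF g] by blast
      have pm: "p div s < m" using tp(2) NK(2) s0 by (simp add: less_mult_imp_div_less)
      show "\<exists>!p. p \<in> filled_cells A c m n \<and> (case p of (t, i, j) \<Rightarrow> A t i j = Some g)"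
      proof (rule ex1I[where a = "(t, p div s, p mod n)"])
        show "(t, p div s, p mod n) \<in> filled_cells A c m n \<and>
          (case (t, p div s, p mod n) of (t, i, j) \<Rightarrow> A t i j = Some g)"
          unfolding filled_cells_def using tp pm n0 Aval[OF tp(2)] by simp
        fix x assume x: "x \<in> filled_cells A c m n \<and> (case x of (t, i, j) \<Rightarrow> A t i j = Some g)"
        obtain t' i' j' where xe: "x = (t', i', j')" by (cases x) auto
        have t': "t' < c" and Ag: "A t' i' j' = Some g" using x unfolding xe filled_cells_def by auto
        then obtain p' where p': "p' < NK" "p' div s = i'" "p' mod n = j'" using Anone by blast
        have "\<Phi> t' p' = g" using Aval[OF p'(1), of t'] Ag p' by simp
        then have "t' = t \<and> p' = p" using \<Phi>inj[OF t' tp(1) p'(1) tp(2)] tp(3) by simp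
        then show "x = (t, p div s, p mod n)" using xe p' by simp
      qed
    qed
    show "\<forall>t<c. \<forall>i<m. card {j. j < n \<and> A t i j \<noteq> None} = s"
      using rowset rowinj rowcard by (simp add: card_image)
    show "\<forall>t<c. \<forall>j<n. card {i. i < m \<and> A t i j \<noteq> None} = k"
      using colset colinj colcard by (simp add: card_image)
    show "\<exists>\<omega>\<in>carrier G. \<exists>\<delta>\<in>carrier G.
        (\<forall>t<c. \<forall>i<m. finprod G (\<lambda>j. the (A t i j)) {j. j < n \<and> A t i j \<noteq> None} = \<omega>) \<and>
        (\<forall>t<c. \<forall>j<n. finprod G (\<lambda>i. the (A t i j)) {i. i < m \<and> A t i j \<noteq> None} = \<delta>)"
      using rowsum colsum ds by auto
  qed
  then show ?thesis unfolding MRS_exists_def by blast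
qed

end
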